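(* Let $\mathbf{X}=(X_1,\dots,X_d)$ be a random vector such that each $X_i$ is a.s. nonnegative with $0<E(X_i)<\infty$, let $\|\mathbf{x}\|_F=E(\max(|x_0|,|x_1|X_1,\dots,|x_d|X_d))$, let $c_i=E(X_i)$ and $\|(x_0,\dots,x_d)\|_{\infty,\mathbf{c}}:=\max(|x_0|,|x_1|c_1,\dots,|x_d|c_d)$. Then $\|(1,1/c_1,\dots,1/c_d)\|_F=1$ if and only if $\|\cdot\|_F=\|\cdot\|_{\infty,\mathbf{c}}$. *)

theory Defs
  imports "HOL-Probability.Probability"
begin

text \<open>Vectors in R^(d+1) are represented as functions nat => real with indices 0..d.
  The random vector (X_1,...,X_d) is a family X :: nat => 'a => real, used at indices 1..d.\<close>

definition normF :: "'a measure \<Rightarrow> (nat \<Rightarrow> 'a \<Rightarrow> real) \<Rightarrow> nat \<Rightarrow> (nat \<Rightarrow> real) \<Rightarrow> real" where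
  "normF M X d x = integral\<^sup>L M (\<lambda>\<omega>. Max ({\<bar>x 0\<bar>} \<union> {\<bar>x i\<bar> * X i \<omega> | i. i \<in> {1..d}}))"

definition norm_inf_c :: "(nat \<Rightarrow> real) \<Rightarrow> nat \<Rightarrow> (nat \<Rightarrow> real) \<Rightarrow> real" where
  "norm_inf_c c d x = Max ({\<bar>x 0\<bar>} \<union> {\<bar>x i\<bar> * c i | i. i \<in> {1..d}})"

end

theory Submission
  imports Defs
begin

lemma Fset_eq:
  "{\<bar>x 0\<bar>} \<union> {\<bar>x i\<bar> * X i \<omega> | i. i \<in> {1..d}} =
   (\<lambda>i. if i = 0 then \<bar>x 0\<bar> else \<bar>x i\<bar> * (X i \<omega>::real)) ` {0..(d::nat)}"
proof -
  have "{0..d} = insert 0 {1..d}" by auto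
  then show ?thesis by (auto simp: image_iff)
qed

lemma Fset_props:
  fixes x :: "nat \<Rightarrow> real"
  shows "finite ({\<bar>x 0\<bar>} \<union> {\<bar>x i\<bar> * X i \<omega> | i. i \<in> {1..(d::nat)}})"
    and "{\<bar>x 0\<bar>} \<union> {\<bar>x i\<bar> * X i \<omega> | i. i \<in> {1..(d::nat)}} \<noteq> {}"
  by auto

lemma F_meas:
  fixes X :: "nat \<Rightarrow> 'a \<Rightarrow> real"
  assumes "\<And>i. i \<in> {1..d} \<Longrightarrow> X i \<in> borel_measurable M"
  shows "(\<lambda>\<omega>. Max ({\<bar>x 0\<bar>} \<union> {\<bar>x i\<bar> * X i \<omega> | i. i \<in> {1..d}})) \<in> borel_measurable M"
proof -
  have "(\<lambda>\<omega>. Max ((\<lambda>i. (\<lambda>i \<omega>. if i = 0 then \<bar>x 0\<bar> else \<bar>x i\<bar> * X i \<omega>) i \<omega>) ` {0..d})) \<in> borel_measurable M"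
  proof (rule borel_measurable_Max)
    fix i assume "i \<in> {0..d}"
    then show "(\<lambda>\<omega>. if i = 0 then \<bar>x 0\<bar> else \<bar>x i\<bar> * X i \<omega>) \<in> borel_measurable M"
      using assms by (cases "i = 0") auto
  qed simp
  then show ?thesis by (simp only: Fset_eq)
qed

lemma F_ge:
  fixes X :: "nat \<Rightarrow> 'a \<Rightarrow> real"
  shows "\<bar>x 0\<bar> \<le> Max ({\<bar>x 0\<bar>} \<union> {\<bar>x i\<bar> * X i \<omega> | i. i \<in> {1..d}})"
    and "i \<in> {1..d} \<Longrightarrow> \<bar>x i\<bar> * X i \<omega> \<le> Max ({\<bar>x 0\<bar>} \<union> {\<bar>x i\<bar> * X i \<omega> | i. i \<in> {1..d}})"
  by (rule Max_ge; auto)+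

lemma F_int:
  fixes X :: "nat \<Rightarrow> 'a \<Rightarrow> real"
  assumes "\<And>i. i \<in> {1..d} \<Longrightarrow> X i \<in> borel_measurable M"
    and "\<And>i. i \<in> {1..d} \<Longrightarrow> integrable M (X i)"
    and "prob_space M"
  shows "integrable M (\<lambda>\<omega>. Max ({\<bar>x 0\<bar>} \<union> {\<bar>x i\<bar> * X i \<omega> | i. i \<in> {1..d}}))"
proof (rule Bochner_Integration.integrable_bound[where f="\<lambda>\<omega>. \<bar>x 0\<bar> + (\<Sum>i\<in>{1..d}. \<bar>x i\<bar> * \<bar>X i \<omega>\<bar>)"])
  interpret prob_space M by fact
  show "integrable M (\<lambda>\<omega>. \<bar>x 0\<bar> + (\<Sum>i\<in>{1..d}. \<bar>x i\<bar> * \<bar>X i \<omega>\<bar>))"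
    using assms(2) by (intro Bochner_Integration.integrable_add integrable_sum integrable_mult_right integrable_abs) auto
  show "(\<lambda>\<omega>. Max ({\<bar>x 0\<bar>} \<union> {\<bar>x i\<bar> * X i \<omega> | i. i \<in> {1..d}})) \<in> borel_measurable M"
    by (rule F_meas[OF assms(1)])
  show "AE \<omega> in M. norm (Max ({\<bar>x 0\<bar>} \<union> {\<bar>x i\<bar> * X i \<omega> | i. i \<in> {1..d}}))
     \<le> norm (\<bar>x 0\<bar> + (\<Sum>i\<in>{1..d}. \<bar>x i\<bar> * \<bar>X i \<omega>\<bar>))"
  proof (rule AE_I2)
    fix \<omega>
    have s0: "0 \<le> (\<Sum>i\<in>{1..d}. \<bar>x i\<bar> * \<bar>X i \<omega>\<bar>)" by (intro sum_nonneg) auto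
    have le: "Max ({\<bar>x 0\<bar>} \<union> {\<bar>x i\<bar> * X i \<omega> | i. i \<in> {1..d}}) \<le> \<bar>x 0\<bar> + (\<Sum>i\<in>{1..d}. \<bar>x i\<bar> * \<bar>X i \<omega>\<bar>)"
    proof (subst Max_le_iff, simp, simp, safe)
      show "\<bar>x 0\<bar> \<le> \<bar>x 0\<bar> + (\<Sum>i\<in>{1..d}. \<bar>x i\<bar> * \<bar>X i \<omega>\<bar>)" using s0 by simp
    next
      fix i assume i: "i \<in> {1..d}"
      have "\<bar>x i\<bar> * X i \<omega> \<le> \<bar>x i\<bar> * \<bar>X i \<omega>\<bar>" by (intro mult_left_mono) auto
      also have "\<dots> \<le> (\<Sum>i\<in>{1..d}. \<bar>x i\<bar> * \<bar>X i \<omega>\<bar>)"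
        using i by (intro member_le_sum) auto
      finally show "\<bar>x i\<bar> * X i \<omega> \<le> \<bar>x 0\<bar> + (\<Sum>i\<in>{1..d}. \<bar>x i\<bar> * \<bar>X i \<omega>\<bar>)" by simp
    qed
    have "0 \<le> Max ({\<bar>x 0\<bar>} \<union> {\<bar>x i\<bar> * X i \<omega> | i. i \<in> {1..d}})"
      using F_ge(1)[of x X \<omega> d] by linarith
    then show "norm (Max ({\<bar>x 0\<bar>} \<union> {\<bar>x i\<bar> * X i \<omega> | i. i \<in> {1..d}}))
     \<le> norm (\<bar>x 0\<bar> + (\<Sum>i\<in>{1..d}. \<bar>x i\<bar> * \<bar>X i \<omega>\<bar>))" using le s0 by simp
  qed
qed

theorem proposition2p18:
  fixes M :: "'a measure" and X :: "nat \<Rightarrow> 'a \<Rightarrow> real" and d :: nat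
  assumes "prob_space M"
    and "\<And>i. i \<in> {1..d} \<Longrightarrow> X i \<in> borel_measurable M"
    and "\<And>i. i \<in> {1..d} \<Longrightarrow> AE \<omega> in M. X i \<omega> \<ge> 0"
    and "\<And>i. i \<in> {1..d} \<Longrightarrow> integrable M (X i)"
    and "\<And>i. i \<in> {1..d} \<Longrightarrow> 0 < integral\<^sup>L M (X i)"
  shows "normF M X d (\<lambda>i. if i = 0 then 1 else 1 / integral\<^sup>L M (X i)) = 1
     \<longleftrightarrow> (\<forall>x. normF M X d x = norm_inf_c (\<lambda>i. integral\<^sup>L M (X i)) d x)"
proof
  interpret prob_space M by fact
  define c where "c = (\<lambda>i. integral\<^sup>L M (X i))"
  define y where "y = (\<lambda>i::nat. if i = 0 then 1 else 1 / c i)"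
  define F where "F = (\<lambda>\<omega>. Max ({\<bar>y 0\<bar>} \<union> {\<bar>y i\<bar> * X i \<omega> | i. i \<in> {1..d}}))"
  have cpos: "\<And>i. i \<in> {1..d} \<Longrightarrow> c i > 0" using assms(5) c_def by auto
  have Fint: "integrable M F" unfolding F_def by (rule F_int[OF assms(2) assms(4) assms(1)])
  {
    assume "normF M X d (\<lambda>i. if i = 0 then 1 else 1 / integral\<^sup>L M (X i)) = 1"
    then have EF: "integral\<^sup>L M F = 1" unfolding normF_def F_def y_def c_def .
    have y0: "\<bar>y 0\<bar> = 1" by (simp add: y_def)
    have yi: "\<bar>y i\<bar> = 1 / c i" if "i \<in> {1..d}" for i
    proof -
      have "c i > 0" "i \<noteq> 0" using cpos that by auto
      then show ?thesis by (simp add: y_def)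
    qed
    have AE1: "AE \<omega> in M. F \<omega> = 1"
    proof -
      have "integral\<^sup>L M (\<lambda>\<omega>. F \<omega> - 1) = 0" using EF Fint by (simp add: prob_space)
      moreover have "AE \<omega> in M. 0 \<le> F \<omega> - 1"
        using F_ge(1)[of y X _ d] y0 by (auto simp: F_def)
      ultimately have "AE \<omega> in M. F \<omega> - 1 = 0"
        using integral_nonneg_eq_0_iff_AE[of M "\<lambda>\<omega>. F \<omega> - 1"] Fint by auto
      then show ?thesis by auto
    qed
    have AE2: "AE \<omega> in M. \<forall>i\<in>{1..d}. X i \<omega> = c i"
    proof (rule AE_finite_allI, simp)
      fix i assume i: "i \<in> {1..d}"
      have "integral\<^sup>L M (\<lambda>\<omega>. F \<omega> - X i \<omega> / c i) = 1 - c i / c i"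
        using EF Fint assms(4)[OF i] by (simp add: c_def)
      also have "\<dots> = 0" using cpos[OF i] by simp
      finally have "integral\<^sup>L M (\<lambda>\<omega>. F \<omega> - X i \<omega> / c i) = 0" .
      moreover have "AE \<omega> in M. 0 \<le> F \<omega> - X i \<omega> / c i"
        using F_ge(2)[of i d y X] yi[OF i] i by (auto simp: F_def)
      moreover have "integrable M (\<lambda>\<omega>. F \<omega> - X i \<omega> / c i)"
        using Fint assms(4)[OF i] by auto
      ultimately have "AE \<omega> in M. F \<omega> - X i \<omega> / c i = 0"
        using integral_nonneg_eq_0_iff_AE[of M "\<lambda>\<omega>. F \<omega> - X i \<omega> / c i"] by auto
      with AE1 show "AE \<omega> in M. X i \<omega> = c i"
      proof eventually_elim
        case (elim \<omega>)
        then show ?case using cpos[OF i] by (simp add: field_simps)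
      qed
    qed
    show "\<forall>x. normF M X d x = norm_inf_c (\<lambda>i. integral\<^sup>L M (X i)) d x"
    proof
      fix x
      have "normF M X d x = integral\<^sup>L M (\<lambda>\<omega>. norm_inf_c c d x)"
        unfolding normF_def
      proof (rule integral_cong_AE)
        show "(\<lambda>\<omega>. Max ({\<bar>x 0\<bar>} \<union> {\<bar>x i\<bar> * X i \<omega> | i. i \<in> {1..d}})) \<in> borel_measurable M"
          by (rule F_meas[OF assms(2)])
        show "(\<lambda>\<omega>. norm_inf_c c d x) \<in> borel_measurable M" by simp
        show "AE \<omega> in M. Max ({\<bar>x 0\<bar>} \<union> {\<bar>x i\<bar> * X i \<omega> | i. i \<in> {1..d}}) = norm_inf_c c d x"
          using AE2
        proof eventually_elim
          case (elim \<omega>)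
          then have "{\<bar>x i\<bar> * X i \<omega> | i. i \<in> {1..d}} = {\<bar>x i\<bar> * c i | i. i \<in> {1..d}}"
            by (auto; metis atLeastAtMost_iff)
          then show ?case unfolding norm_inf_c_def by simp
        qed
      qed
      also have "\<dots> = norm_inf_c c d x" by (simp add: prob_space)
      finally show "normF M X d x = norm_inf_c (\<lambda>i. integral\<^sup>L M (X i)) d x" by (simp add: c_def)
    qed
  }
  {
    assume H: "\<forall>x. normF M X d x = norm_inf_c (\<lambda>i. integral\<^sup>L M (X i)) d x"
    have "norm_inf_c c d y = 1"
    proof -
      have eq: "{\<bar>y 0\<bar>} \<union> {\<bar>y i\<bar> * c i | i. i \<in> {1..d}} = {1}"
      proof -
        have "\<bar>y i\<bar> * c i = 1" if "i \<in> {1..d}" for i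
        proof -
          have "c i > 0" "i \<noteq> 0" using cpos that by auto
          then show ?thesis by (simp add: y_def)
        qed
        then show ?thesis by (auto simp: y_def)
      qed
      show ?thesis unfolding norm_inf_c_def eq by simp
    qed
    then show "normF M X d (\<lambda>i. if i = 0 then 1 else 1 / integral\<^sup>L M (X i)) = 1"
      using H unfolding y_def c_def by simp
  }
qed

end
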